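(* Let $(\Gamma,d)$ be as in the context, with shells $S_m$ and shadows $O(g)$. There exist $R,\Delta\ge0$ depending only on $(\Gamma,d)$ such that for all $n$ and all $r>n+\Delta$, for every $g\in S_r$, every $\xi\in O(g)$ and every $h\in S_n$, \[|\beta_\xi(h,e)-\beta_g(h,e)|\le R.\]
   Context: $\Gamma$ is a finitely generated group acting properly cocompactly by isometries on a proper quasiruled hyperbolic space $(X,d)$ with basepoint $x_0$, and $d(g,h)=d(g.x_0,h.x_0)$ makes $(\Gamma,d)$ a proper quasiruled hyperbolic space (points joined by $(\lambda,c)$-quasigeodesics which are $\tau$-quasirulers, i.e. $(z(s)|z(u))_{z(t)}\le\tau$ for $s<t<u$ with Gromov product $(x|y)_w=\frac12(d(x,w)+d(y,w)-d(x,y))$; quasitriangles uniformly thin). $\partial\Gamma$ is the visual boundary. For $z\in\Gamma$, $\beta_z(x,y)=d(z,x)-d(z,y)$; for $\xi\in\partial\Gamma$, $\beta_\xi(x,y)=\sup\limsup_{t\to\infty}(d(z(t),x)-d(z(t),y))$ over quasiruler rays $z$ from $y$ to $\xi$. $B_m=\{g:d(g,e)\le m\}$, $S_m=B_m\setminus B_{m-k}$ for a fixed $k$, and $O(g)=O_C(e,g)$ is the set of $\xi\in\partial\Gamma$ such that some quasiruler ray from $e$ to $\xi$ meets the closed $C$-ball about $g$, for a fixed constant $C\ge0$. *)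

theory Defs
  imports "HOL-Analysis.Analysis" "HOL-Algebra.Group_Action" "HOL-Algebra.Generated_Groups"
    "HOL-Library.Liminf_Limsup"
begin

definition gprod :: "('p \<Rightarrow> 'p \<Rightarrow> real) \<Rightarrow> 'p \<Rightarrow> 'p \<Rightarrow> 'p \<Rightarrow> real" where
  "gprod dd x y w = (dd x w + dd y w - dd x y) / 2"

definition quasigeod :: "('p \<Rightarrow> 'p \<Rightarrow> real) \<Rightarrow> real \<Rightarrow> real \<Rightarrow> real set \<Rightarrow> (real \<Rightarrow> 'p) \<Rightarrow> bool" where
  "quasigeod dd lam c I z \<longleftrightarrow>
     (\<forall>s\<in>I. \<forall>t\<in>I. \<bar>s - t\<bar> / lam - c \<le> dd (z s) (z t) \<and> dd (z s) (z t) \<le> lam * \<bar>s - t\<bar> + c)"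

definition quasiruler :: "('p \<Rightarrow> 'p \<Rightarrow> real) \<Rightarrow> real \<Rightarrow> real set \<Rightarrow> (real \<Rightarrow> 'p) \<Rightarrow> bool" where
  "quasiruler dd tau I z \<longleftrightarrow>
     (\<forall>s\<in>I. \<forall>t\<in>I. \<forall>u\<in>I. s < t \<and> t < u \<longrightarrow> gprod dd (z s) (z u) (z t) \<le> tau)"

definition quasiruled_space :: "('p \<Rightarrow> 'p \<Rightarrow> real) \<Rightarrow> 'p set \<Rightarrow> real \<Rightarrow> real \<Rightarrow> real \<Rightarrow> bool" where
  "quasiruled_space dd A lam c tau \<longleftrightarrow>
     (\<forall>x\<in>A. \<forall>y\<in>A. \<exists>L\<ge>0. \<exists>z. (\<forall>t\<in>{0..L}. z t \<in> A) \<and> z 0 = x \<and> z L = y \<and>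
        quasigeod dd lam c {0..L} z \<and> quasiruler dd tau {0..L} z)"

definition gromov_hyperbolic :: "('p \<Rightarrow> 'p \<Rightarrow> real) \<Rightarrow> 'p set \<Rightarrow> real \<Rightarrow> bool" where
  "gromov_hyperbolic dd A delta \<longleftrightarrow>
     (\<forall>x\<in>A. \<forall>y\<in>A. \<forall>z\<in>A. \<forall>w\<in>A.
        min (gprod dd x y w) (gprod dd y z w) - delta \<le> gprod dd x z w)"

definition qr_ray :: "('p \<Rightarrow> 'p \<Rightarrow> real) \<Rightarrow> 'p set \<Rightarrow> real \<Rightarrow> real \<Rightarrow> real \<Rightarrow> (real \<Rightarrow> 'p) \<Rightarrow> bool" where
  "qr_ray dd A lam c tau z \<longleftrightarrow>
     (\<forall>t\<ge>0. z t \<in> A) \<and> quasigeod dd lam c {0..} z \<and> quasiruler dd tau {0..} z"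

definition rays_equiv :: "('p \<Rightarrow> 'p \<Rightarrow> real) \<Rightarrow> (real \<Rightarrow> 'p) \<Rightarrow> (real \<Rightarrow> 'p) \<Rightarrow> bool" where
  "rays_equiv dd z w \<longleftrightarrow>
     (\<exists>K. (\<forall>s\<ge>0. \<exists>t\<ge>0. dd (z s) (w t) \<le> K) \<and> (\<forall>t\<ge>0. \<exists>s\<ge>0. dd (z s) (w t) \<le> K))"

definition vis_bdry :: "('p \<Rightarrow> 'p \<Rightarrow> real) \<Rightarrow> 'p set \<Rightarrow> real \<Rightarrow> real \<Rightarrow> real \<Rightarrow> (real \<Rightarrow> 'p) set set" where
  "vis_bdry dd A lam c tau =
     {{w. qr_ray dd A lam c tau w \<and> rays_equiv dd w z} | z. qr_ray dd A lam c tau z}"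

definition busemann_bdry :: "('p \<Rightarrow> 'p \<Rightarrow> real) \<Rightarrow> (real \<Rightarrow> 'p) set \<Rightarrow> 'p \<Rightarrow> 'p \<Rightarrow> real" where
  "busemann_bdry dd xi x y =
     real_of_ereal (SUP z \<in> {z \<in> xi. z 0 = y}.
        Limsup at_top (\<lambda>t::real. ereal (dd (z t) x - dd (z t) y)))"

definition busemann_pt :: "('p \<Rightarrow> 'p \<Rightarrow> real) \<Rightarrow> 'p \<Rightarrow> 'p \<Rightarrow> 'p \<Rightarrow> real" where
  "busemann_pt dd z x y = dd z x - dd z y"

definition ballB :: "('p \<Rightarrow> 'p \<Rightarrow> real) \<Rightarrow> 'p set \<Rightarrow> 'p \<Rightarrow> real \<Rightarrow> 'p set" where
  "ballB dd A e m = {g \<in> A. dd g e \<le> m}"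

definition shell :: "('p \<Rightarrow> 'p \<Rightarrow> real) \<Rightarrow> 'p set \<Rightarrow> 'p \<Rightarrow> real \<Rightarrow> real \<Rightarrow> 'p set" where
  "shell dd A e k m = ballB dd A e m - ballB dd A e (m - k)"

definition shadow :: "('p \<Rightarrow> 'p \<Rightarrow> real) \<Rightarrow> 'p set \<Rightarrow> real \<Rightarrow> real \<Rightarrow> real \<Rightarrow> real \<Rightarrow> 'p \<Rightarrow> 'p \<Rightarrow> (real \<Rightarrow> 'p) set set" where
  "shadow dd A lam c tau C e g =
     {xi \<in> vis_bdry dd A lam c tau. \<exists>z\<in>xi. z 0 = e \<and> (\<exists>t\<ge>0. dd (z t) g \<le> C)}"

definition finitely_generated :: "('g, 'b) monoid_scheme \<Rightarrow> bool" where
  "finitely_generated G \<longleftrightarrow> (\<exists>S. finite S \<and> S \<subseteq> carrier G \<and> generate G S = carrier G)"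

definition isom_proper_cocompact :: "('g, 'b) monoid_scheme \<Rightarrow> ('g \<Rightarrow> 'x::metric_space \<Rightarrow> 'x) \<Rightarrow> bool" where
  "isom_proper_cocompact G \<phi> \<longleftrightarrow>
     group_action G UNIV \<phi> \<and>
     (\<forall>g\<in>carrier G. \<forall>x y. dist (\<phi> g x) (\<phi> g y) = dist x y) \<and>
     (\<forall>K. compact K \<longrightarrow> finite {g \<in> carrier G. \<phi> g ` K \<inter> K \<noteq> {}}) \<and>
     (\<exists>K. compact K \<and> (\<Union>g\<in>carrier G. \<phi> g ` K) = UNIV)"

definition orbit_dist :: "('g \<Rightarrow> 'x::metric_space \<Rightarrow> 'x) \<Rightarrow> 'x \<Rightarrow> 'g \<Rightarrow> 'g \<Rightarrow> real" where
  "orbit_dist \<phi> x0 g h = dist (\<phi> g x0) (\<phi> h x0)"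

end

theory Submission
  imports Defs
begin

lemma gp_le:
  assumes sym: "\<And>x y. d x y = d y x" and tri: "\<And>x y z. d x z \<le> d x y + d y z"
  shows "gprod d x y w \<le> d y w"
  using tri[of x w y] sym[of y x] unfolding gprod_def by (simp add: field_simps)

lemma gp_sym:
  assumes sym: "\<And>x y. d x y = d y x"
  shows "gprod d x y w = gprod d y x w"
  unfolding gprod_def using sym[of x y] by simp

lemma rayA:
  assumes sym: "\<And>x y. d x y = d y x" and tri: "\<And>x y z. d x z \<le> d x y + d y z"
    and qr: "quasiruler d tau {0..} z" and z0: "z 0 = e" and t0: "t0 \<ge> 0"
    and dz: "d (z t0) g \<le> C" and tau: "tau \<ge> 0" and tt: "t > t0"
  shows "gprod d (z t) g e \<ge> d g e - C - tau"
proof (cases "t0 = 0")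
  case True
  hence "d e g \<le> C" using dz z0 by simp
  moreover have "d (z t) g \<le> d (z t) e + d e g" by (rule tri)
  ultimately have "0 \<le> d (z t) e + d g e - d (z t) g" using sym[of g e] by linarith
  moreover have "d g e - C - tau \<le> 0" using \<open>d e g \<le> C\<close> sym[of g e] tau by linarith
  ultimately show ?thesis unfolding gprod_def by (simp add: field_simps)
next
  case False
  hence "0 < t0" using t0 by simp
  hence "gprod d (z 0) (z t) (z t0) \<le> tau" using qr tt t0 unfolding quasiruler_def by auto
  hence q: "d e (z t0) + d (z t) (z t0) - d e (z t) \<le> 2 * tau" using z0 unfolding gprod_def by simp
  have a: "d (z t) g \<le> d (z t) (z t0) + d (z t0) g" by (rule tri)
  have b: "d g e \<le> d g (z t0) + d (z t0) e" by (rule tri)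
  have "2*(d g e - C - tau) \<le> d (z t) e + d g e - d (z t) g"
    using q a b dz sym[of g "z t0"] sym[of e "z t0"] sym[of e "z t"] by (smt (verit))
  thus ?thesis unfolding gprod_def by (simp add: field_simps)
qed

lemma rayB:
  assumes sym: "\<And>x y. d x y = d y x" and tri: "\<And>x y z. d x z \<le> d x y + d y z"
    and hyp: "\<forall>x\<in>A. \<forall>y\<in>A. \<forall>z\<in>A. \<forall>w\<in>A. min (gprod d x y w) (gprod d y z w) - \<delta> \<le> gprod d x z w"
    and zr: "qr_ray d A lam c tau z" and z0: "z 0 = e" and t0: "t0 \<ge> 0"
    and dz: "d (z t0) g \<le> C" and tau: "tau \<ge> 0" and C: "C \<ge> 0" and gA: "g \<in> A" and eA: "e \<in> A"
    and lam: "lam \<ge> 1"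
    and wr: "qr_ray d A lam c tau w" and w0: "w 0 = e"
    and K: "\<forall>s\<ge>0. \<exists>t\<ge>0. d (w s) (z t) \<le> K"
  shows "eventually (\<lambda>s. gprod d (w s) g e \<ge> d g e - C - tau - \<delta>) at_top"
proof -
  define M where "M = max (lam*t0 + K + c) (d g e + K)"
  have ev: "eventually (\<lambda>s::real. s \<ge> max 0 (lam*(M + c + 1))) at_top"
    by (rule eventually_ge_at_top)
  show ?thesis
  proof (rule eventually_mono[OF ev])
    fix s :: real assume s: "s \<ge> max 0 (lam*(M + c + 1))"
    have s0: "s \<ge> 0" using s by simp
    have "s / lam \<ge> M + c + 1" using s lam by (simp add: field_simps)
    moreover have "\<bar>s - 0\<bar> / lam - c \<le> d (w s) (w 0)"
    proof -
      have "quasigeod d lam c {0..} w" using wr unfolding qr_ray_def by simp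
      thus ?thesis using s0 unfolding quasigeod_def by (meson atLeast_iff order_refl)
    qed
    ultimately have dws: "d (w s) e > M" using s0 w0 by simp
    obtain t where t: "t \<ge> 0" "d (w s) (z t) \<le> K" using K s0 by blast
    have "d (w s) e \<le> d (w s) (z t) + d (z t) e" by (rule tri)
    hence dzt: "d (z t) e \<ge> d (w s) e - K" using t by simp
    have "d (z t) (z 0) \<le> lam * \<bar>t - 0\<bar> + c"
    proof -
      have "quasigeod d lam c {0..} z" using zr unfolding qr_ray_def by simp
      thus ?thesis using t unfolding quasigeod_def by (meson atLeast_iff order_refl)
    qed
    hence "lam * t + c \<ge> d (z t) e" using z0 t by simp
    hence "lam * t > lam * t0" using dzt dws unfolding M_def by simp
    hence tt: "t > t0" using lam by simp
    have qz: "quasiruler d tau {0..} z" using zr unfolding qr_ray_def by simp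
    have A1: "gprod d (z t) g e \<ge> d g e - C - tau" by (rule rayA[OF sym tri qz z0 t0 dz tau tt])
    have wsA: "w s \<in> A" using wr s0 unfolding qr_ray_def by simp
    have ztA: "z t \<in> A" using zr t unfolding qr_ray_def by simp
    have h: "min (gprod d (w s) (z t) e) (gprod d (z t) g e) - \<delta> \<le> gprod d (w s) g e"
      using hyp wsA ztA gA eA by blast
    have "gprod d (w s) (z t) e \<ge> d (w s) e - K"
      using dzt t unfolding gprod_def by simp
    hence "gprod d (w s) (z t) e \<ge> d g e - C - tau"
      using dws C tau unfolding M_def by simp
    hence "min (gprod d (w s) (z t) e) (gprod d (z t) g e) \<ge> d g e - C - tau" using A1 by simp
    thus "gprod d (w s) g e \<ge> d g e - C - tau - \<delta>" using h by linarith
  qed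
qed

lemma busC:
  assumes sym: "\<And>x y. d x y = d y x" and tri: "\<And>x y z. d x z \<le> d x y + d y z"
    and hyp: "\<forall>x\<in>A. \<forall>y\<in>A. \<forall>z\<in>A. \<forall>w\<in>A. min (gprod d x y w) (gprod d y z w) - \<delta> \<le> gprod d x z w"
    and dl: "\<delta> \<ge> 0"
    and p: "p \<in> A" and g: "g \<in> A" and h: "h \<in> A" and e: "e \<in> A"
    and big: "gprod d p g e \<ge> n + \<delta>" and hn: "d h e \<le> n"
  shows "\<bar>(d p h - d p e) - (d g h - d g e)\<bar> \<le> 2 * \<delta>"
proof -
  have gh: "gprod d g h e \<le> n" using tri[of g e h] sym[of h g] hn unfolding gprod_def by (simp add: field_simps)
  have ph: "gprod d p h e \<le> n" using tri[of p e h] sym[of h p] hn unfolding gprod_def by (simp add: field_simps)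
  have h1: "min (gprod d p g e) (gprod d g h e) - \<delta> \<le> gprod d p h e" using hyp p g h e by blast
  have h2: "min (gprod d g p e) (gprod d p h e) - \<delta> \<le> gprod d g h e" using hyp p g h e by blast
  have s: "gprod d g p e = gprod d p g e" by (rule gp_sym[OF sym])
  have i1: "gprod d p h e \<ge> gprod d g h e - \<delta>" using h1 big gh dl by (simp add: min_def split: if_splits)
  have i2: "gprod d g h e \<ge> gprod d p h e - \<delta>" using h2 s big ph dl by (auto simp: min_def split: if_splits)
  have e1: "d p h - d p e = d h e - 2 * gprod d p h e" unfolding gprod_def by (simp add: field_simps)
  have e2: "d g h - d g e = d h e - 2 * gprod d g h e" unfolding gprod_def by (simp add: field_simps)
  show ?thesis using i1 i2 e1 e2 by linarith
qed

theorem mainTheorem9: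
  fixes G :: "('g, 'b) monoid_scheme" and \<phi> :: "'g \<Rightarrow> 'x::metric_space \<Rightarrow> 'x"
    and x0 :: 'x and lam c tau k C :: real
  defines "d \<equiv> orbit_dist \<phi> x0"
  assumes "group G"
    and "finitely_generated G"
    and "isom_proper_cocompact G \<phi>"
    and "\<forall>x r. compact (cball (x::'x) r)"
    and "\<exists>lX cX tX. quasiruled_space dist (UNIV :: 'x set) lX cX tX"
    and "\<exists>dX. gromov_hyperbolic dist (UNIV :: 'x set) dX"
    and "lam \<ge> 1" and "c \<ge> 0" and "tau \<ge> 0"
    and "quasiruled_space d (carrier G) lam c tau"
    and "\<exists>delta. gromov_hyperbolic d (carrier G) delta"
    and "k > 0" and "C \<ge> 0"
  shows "\<exists>R\<ge>0. \<exists>\<Delta>\<ge>0. \<forall>n r :: nat. real r > real n + \<Delta> \<longrightarrow>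
           (\<forall>g \<in> shell d (carrier G) \<one>\<^bsub>G\<^esub> k (real r).
            \<forall>\<xi> \<in> shadow d (carrier G) lam c tau C \<one>\<^bsub>G\<^esub> g.
            \<forall>h \<in> shell d (carrier G) \<one>\<^bsub>G\<^esub> k (real n).
              \<bar>busemann_bdry d \<xi> h \<one>\<^bsub>G\<^esub> - busemann_pt d g h \<one>\<^bsub>G\<^esub>\<bar> \<le> R)"
proof -
  have sym: "\<And>x y. d x y = d y x" unfolding d_def orbit_dist_def by (simp add: dist_commute)
  have tri: "\<And>x y z. d x z \<le> d x y + d y z" unfolding d_def orbit_dist_def by (rule dist_triangle)
  obtain delta where hd: "gromov_hyperbolic d (carrier G) delta" using assms(12) by blast
  define \<delta> where "\<delta> = max delta 0"
  have dl: "\<delta> \<ge> 0" unfolding \<delta>_def by simp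
  have hyp: "\<forall>x\<in>carrier G. \<forall>y\<in>carrier G. \<forall>z\<in>carrier G. \<forall>w\<in>carrier G.
      min (gprod d x y w) (gprod d y z w) - \<delta> \<le> gprod d x z w"
    using hd unfolding gromov_hyperbolic_def \<delta>_def by force
  define e where "e = \<one>\<^bsub>G\<^esub>"
  have eA: "e \<in> carrier G" unfolding e_def using assms(2) by (simp add: group.is_monoid monoid.one_closed)
  have main: "\<forall>n r :: nat. real r > real n + (C + tau + 2*\<delta> + k) \<longrightarrow>
           (\<forall>g \<in> shell d (carrier G) \<one>\<^bsub>G\<^esub> k (real r).
            \<forall>\<xi> \<in> shadow d (carrier G) lam c tau C \<one>\<^bsub>G\<^esub> g.
            \<forall>h \<in> shell d (carrier G) \<one>\<^bsub>G\<^esub> k (real n).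
              \<bar>busemann_bdry d \<xi> h \<one>\<^bsub>G\<^esub> - busemann_pt d g h \<one>\<^bsub>G\<^esub>\<bar> \<le> 2*\<delta>)"
  proof (intro allI impI ballI)
    fix n r :: nat and g \<xi> h
    assume nr: "real r > real n + (C + tau + 2*\<delta> + k)"
      and gS: "g \<in> shell d (carrier G) \<one>\<^bsub>G\<^esub> k (real r)"
      and \<xi>S: "\<xi> \<in> shadow d (carrier G) lam c tau C \<one>\<^bsub>G\<^esub> g"
      and hS: "h \<in> shell d (carrier G) \<one>\<^bsub>G\<^esub> k (real n)"
    have gA: "g \<in> carrier G" and dg: "d g e > real r - k"
      using gS unfolding shell_def ballB_def e_def by auto
    have hA: "h \<in> carrier G" and dh: "d h e \<le> real n"
      using hS unfolding shell_def ballB_def e_def by auto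
    obtain z t0 where zx: "z \<in> \<xi>" and z0: "z 0 = e" and t0: "t0 \<ge> 0" and dz: "d (z t0) g \<le> C"
      using \<xi>S unfolding shadow_def e_def by blast
    obtain z1 where z1: "\<xi> = {w. qr_ray d (carrier G) lam c tau w \<and> rays_equiv d w z1}"
      using \<xi>S unfolding shadow_def vis_bdry_def by blast
    have zr: "qr_ray d (carrier G) lam c tau z" and zeq: "rays_equiv d z z1" using zx z1 by auto
    define b where "b = busemann_pt d g h e"
    have lim: "Limsup at_top (\<lambda>t::real. ereal (d (w t) h - d (w t) e)) \<in> {ereal (b - 2*\<delta>)..ereal (b + 2*\<delta>)}"
      if wx: "w \<in> \<xi>" and w0: "w 0 = e" for w
    proof -
      have wr: "qr_ray d (carrier G) lam c tau w" and weq: "rays_equiv d w z1" using wx z1 by auto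
      obtain K1 where K1: "\<forall>s\<ge>0. \<exists>t\<ge>0. d (w s) (z1 t) \<le> K1" using weq unfolding rays_equiv_def by blast
      obtain K2 where K2: "\<forall>t\<ge>0. \<exists>s\<ge>0. d (z s) (z1 t) \<le> K2" using zeq unfolding rays_equiv_def by blast
      have K: "\<forall>s\<ge>0. \<exists>t\<ge>0. d (w s) (z t) \<le> K1 + K2"
      proof (intro allI impI)
        fix s :: real assume "s \<ge> 0"
        then obtain u where u: "u \<ge> 0" "d (w s) (z1 u) \<le> K1" using K1 by blast
        then obtain t where t: "t \<ge> 0" "d (z t) (z1 u) \<le> K2" using K2 by blast
        have "d (w s) (z t) \<le> d (w s) (z1 u) + d (z1 u) (z t)" by (rule tri)
        thus "\<exists>t\<ge>0. d (w s) (z t) \<le> K1 + K2" using u t sym[of "z1 u" "z t"] by (intro exI[of _ t]) auto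
      qed
      have ev: "eventually (\<lambda>s. gprod d (w s) g e \<ge> d g e - C - tau - \<delta>) at_top"
        by (rule rayB[OF sym tri hyp zr z0 t0 dz assms(10) assms(14) gA eA assms(8) wr w0 K])
      have ev2: "eventually (\<lambda>s. \<bar>(d (w s) h - d (w s) e) - b\<bar> \<le> 2*\<delta>) at_top"
      proof (rule eventually_mono[OF eventually_conj[OF ev eventually_ge_at_top[of "0::real"]]])
        fix s :: real assume a: "d g e - C - tau - \<delta> \<le> gprod d (w s) g e \<and> 0 \<le> s"
        have wsA: "w s \<in> carrier G" using wr a unfolding qr_ray_def by simp
        have "gprod d (w s) g e \<ge> real n + \<delta>" using a dg nr by linarith
        from busC[OF sym tri hyp dl wsA gA hA eA this dh]
        show "\<bar>(d (w s) h - d (w s) e) - b\<bar> \<le> 2*\<delta>" unfolding b_def busemann_pt_def .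
      qed
      have up: "Limsup at_top (\<lambda>t::real. ereal (d (w t) h - d (w t) e)) \<le> ereal (b + 2*\<delta>)"
        by (rule Limsup_bounded) (rule eventually_mono[OF ev2], simp)
      have lo: "ereal (b - 2*\<delta>) \<le> Limsup at_top (\<lambda>t::real. ereal (d (w t) h - d (w t) e))"
        by (rule le_Limsup) (simp, rule eventually_mono[OF ev2], simp)
      show ?thesis using up lo by simp
    qed
    define S where "S = (SUP w \<in> {w \<in> \<xi>. w 0 = e}. Limsup at_top (\<lambda>t::real. ereal (d (w t) h - d (w t) e)))"
    have Sup: "S \<le> ereal (b + 2*\<delta>)" unfolding S_def using lim by (intro SUP_least) auto
    have Slo: "ereal (b - 2*\<delta>) \<le> S" unfolding S_def
      using lim[OF zx z0] zx z0 by (intro SUP_upper2[of z]) auto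
    have "busemann_bdry d \<xi> h e = real_of_ereal S" unfolding busemann_bdry_def S_def by simp
    moreover have "real_of_ereal S \<in> {b - 2*\<delta> .. b + 2*\<delta>}"
      using Sup Slo by (cases S) auto
    ultimately show "\<bar>busemann_bdry d \<xi> h \<one>\<^bsub>G\<^esub> - busemann_pt d g h \<one>\<^bsub>G\<^esub>\<bar> \<le> 2*\<delta>"
      unfolding b_def e_def by auto
  qed
  have p1: "2*\<delta> \<ge> 0" and p2: "C + tau + 2*\<delta> + k \<ge> 0" using dl assms(10,13,14) by auto
  show ?thesis using main p1 p2 by blast
qed

end
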